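(* For every integer $n\ge 4$, $\chi^{\mathsf{s}}_{3,4}(n)\ge \lfloor\sqrt{n}\rfloor$.
   Context: A $k$-uniform hypergraph $H=(V,E)$ consists of a finite set $V$ and $E\subseteq\binom{V}{k}$. A (linear) embedding of $H$ into $\mathbb{R}^d$ is a map $\phi:V(H)\to\mathbb{R}^d$ with $\dim\operatorname{aff}\phi(e)=k-1$ for every edge $e$ and $\operatorname{conv}\phi(e_1)\cap\operatorname{conv}\phi(e_2)=\operatorname{conv}\phi(e_1\cap e_2)$ for all edges $e_1,e_2$. $\mathcal{E}_{d,k}$ is the set of $k$-uniform hypergraphs admitting such an embedding into $\mathbb{R}^d$. A strong $c$-coloring of $H$ is a map $\kappa:V(H)\to\{1,\dots,c\}$ with $|\kappa(e)|=k$ for every edge $e$; $\chi^{\mathsf{s}}(H)$ is the least such $c$. $\chi^{\mathsf{s}}_{d,k}(n)=\max\{\chi^{\mathsf{s}}(H): H\in\mathcal{E}_{d,k},\ |V(H)|=n\}$. *)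

theory Defs
  imports "HOL-Analysis.Analysis"
begin

definition uniform_hypergraph :: "nat \<Rightarrow> 'v set \<Rightarrow> 'v set set \<Rightarrow> bool" where
  "uniform_hypergraph k V E \<longleftrightarrow> finite V \<and> E \<subseteq> {e. e \<subseteq> V \<and> card e = k}"

definition linear_embedding :: "nat \<Rightarrow> 'v set \<Rightarrow> 'v set set \<Rightarrow> ('v \<Rightarrow> 'a::euclidean_space) \<Rightarrow> bool" where
  "linear_embedding k V E \<phi> \<longleftrightarrow>
     (\<forall>e\<in>E. aff_dim (\<phi> ` e) = int k - 1) \<and>
     (\<forall>e1\<in>E. \<forall>e2\<in>E. convex hull (\<phi> ` e1) \<inter> convex hull (\<phi> ` e2) = convex hull (\<phi> ` (e1 \<inter> e2)))"

text \<open>Membership in E_{d,k}, where the Euclidean space R^d is given as a type 'a.\<close>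
definition embeddable :: "'a::euclidean_space itself \<Rightarrow> nat \<Rightarrow> 'v set \<Rightarrow> 'v set set \<Rightarrow> bool" where
  "embeddable _ k V E \<longleftrightarrow> uniform_hypergraph k V E \<and> (\<exists>\<phi> :: 'v \<Rightarrow> 'a. linear_embedding k V E \<phi>)"

definition strong_coloring :: "nat \<Rightarrow> nat \<Rightarrow> 'v set \<Rightarrow> 'v set set \<Rightarrow> ('v \<Rightarrow> nat) \<Rightarrow> bool" where
  "strong_coloring k c V E \<kappa> \<longleftrightarrow> \<kappa> ` V \<subseteq> {1..c} \<and> (\<forall>e\<in>E. card (\<kappa> ` e) = k)"

definition strong_chromatic :: "nat \<Rightarrow> 'v set \<Rightarrow> 'v set set \<Rightarrow> nat" where
  "strong_chromatic k V E = (LEAST c. \<exists>\<kappa>. strong_coloring k c V E \<kappa>)"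

text \<open>chi^s_{d,k}(n); hypergraphs are taken with vertices in nat (every finite
  hypergraph is isomorphic to one of these).\<close>
definition chi_s_dk :: "'a::euclidean_space itself \<Rightarrow> nat \<Rightarrow> nat \<Rightarrow> nat" where
  "chi_s_dk d k n = Max {strong_chromatic k V E | (V :: nat set) E.
       embeddable d k V E \<and> card V = n}"

end

theory Submission
  imports Defs
begin


definition phi :: "nat \<Rightarrow> real^3" where
  "phi t = vector [real t, (real t)^2, (real t)^3]"

definition cub :: "real \<Rightarrow> real \<Rightarrow> real \<Rightarrow> real \<Rightarrow> real \<Rightarrow> real" where
  "cub c0 c1 c2 c3 t = c0 + c1*t + c2*t^2 + c3*t^3"

lemma inner_phi: "w \<bullet> phi t = w$1 * real t + w$2 * (real t)^2 + w$3 * (real t)^3"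
  by (simp add: phi_def inner_vec_def sum_3 mult.commute)

lemma inj_phi: "inj phi"
proof
  fix x y assume "phi x = phi y"
  then have "phi x $ 1 = phi y $ 1" by simp
  then show "x = y" by (simp add: phi_def)
qed

lemma cubic_roots:
  fixes c0 c1 c2 c3 t1 t2 t3 t4 :: real
  assumes d: "t1 \<noteq> t2" "t1 \<noteq> t3" "t1 \<noteq> t4" "t2 \<noteq> t3" "t2 \<noteq> t4" "t3 \<noteq> t4"
    and z: "cub c0 c1 c2 c3 t1 = 0" "cub c0 c1 c2 c3 t2 = 0" "cub c0 c1 c2 c3 t3 = 0" "cub c0 c1 c2 c3 t4 = 0"
  shows "c1 = 0 \<and> c2 = 0 \<and> c3 = 0"
proof -
  define q where "q x y = c1 + c2*(x+y) + c3*(x^2+x*y+y^2)" for x y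
  have qd: "cub c0 c1 c2 c3 x - cub c0 c1 c2 c3 y = (x - y) * q x y" for x y
    unfolding q_def cub_def by (simp add: algebra_simps power2_eq_square power3_eq_cube)
  have q0: "q x y = 0" if "cub c0 c1 c2 c3 x = 0" "cub c0 c1 c2 c3 y = 0" "x \<noteq> y" for x y
    using qd[of x y] that by simp
  have q12: "q t1 t2 = 0" and q13: "q t1 t3 = 0" and q14: "q t1 t4 = 0"
    using q0 z d by auto
  define r where "r x = c2 + c3*(t1 + t2 + x)" for x
  have rd: "q t1 t2 - q t1 x = (t2 - x) * r x" for x
    unfolding q_def r_def by (simp add: algebra_simps power2_eq_square)
  have r3: "r t3 = 0" using rd[of t3] q12 q13 d by simp
  have r4: "r t4 = 0" using rd[of t4] q12 q14 d by simp
  have "r t3 - r t4 = c3 * (t3 - t4)" unfolding r_def by (simp add: algebra_simps)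
  then have c3: "c3 = 0" using r3 r4 d by simp
  then have c2: "c2 = 0" using r3 unfolding r_def by simp
  then have "c1 = 0" using q12 c3 unfolding q_def by simp
  then show ?thesis using c2 c3 by simp
qed

definition edge :: "nat \<Rightarrow> nat \<Rightarrow> nat set" where
  "edge a b = {2*a, 2*a+1, 2*b, 2*b+1}"

lemma aff_dim_edge:
  assumes "a \<noteq> b"
  shows "aff_dim (phi ` edge a b) = 3"
proof -
  have "aff_dim (phi ` edge a b) \<le> 3" using aff_dim_le_DIM[of "phi ` edge a b"] by simp
  moreover have "\<not> aff_dim (phi ` edge a b) < 3"
  proof
    assume "aff_dim (phi ` edge a b) < 3"
    then have "aff_dim (phi ` edge a b) < int DIM(real^3)" by simp
    then obtain w b0 where w: "w \<noteq> 0" "phi ` edge a b \<subseteq> {x. w \<bullet> x = b0}"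
      by (rule aff_lowdim_subset_hyperplane)
    have z: "cub (-b0) (w$1) (w$2) (w$3) (real t) = 0" if "t \<in> edge a b" for t
      using w(2) that by (auto simp: cub_def inner_phi)
    have "w$1 = 0 \<and> w$2 = 0 \<and> w$3 = 0"
      apply (rule cubic_roots[of "real (2*a)" "real (2*a+1)" "real (2*b)" "real (2*b+1)" "-b0"])
      using assms apply simp_all
      using z[of "2*a"] z[of "2*a+1"] z[of "2*b"] z[of "2*b+1"] by (simp_all add: edge_def)
    then have "w = 0" by (simp add: vec_eq_iff forall_3)
    then show False using w by simp
  qed
  ultimately show ?thesis by simp
qed

definition sepok :: "nat set \<Rightarrow> nat set \<Rightarrow> bool" where
  "sepok A B \<longleftrightarrow> (\<exists>c0 c1 c2 c3. (\<forall>t\<in>A. cub c0 c1 c2 c3 (real t) \<ge> 0 \<and> (cub c0 c1 c2 c3 (real t) = 0 \<longrightarrow> t \<in> B))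
      \<and> (\<forall>t\<in>B. cub c0 c1 c2 c3 (real t) \<le> 0))"

lemma sepok_hull:
  assumes "finite A" "finite B" "sepok A B"
  shows "convex hull (phi ` A) \<inter> convex hull (phi ` B) = convex hull (phi ` (A \<inter> B))"
proof
  show "convex hull (phi ` (A \<inter> B)) \<subseteq> convex hull (phi ` A) \<inter> convex hull (phi ` B)"
    by (intro Int_greatest hull_mono image_mono Int_lower1 Int_lower2)
next
  obtain c0 c1 c2 c3 where cA: "\<And>t. t\<in>A \<Longrightarrow> cub c0 c1 c2 c3 (real t) \<ge> 0 \<and> (cub c0 c1 c2 c3 (real t) = 0 \<longrightarrow> t \<in> B)"
    and cB: "\<And>t. t\<in>B \<Longrightarrow> cub c0 c1 c2 c3 (real t) \<le> 0"
    using assms(3) unfolding sepok_def by blast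
  define w :: "real^3" where "w = vector [c1, c2, c3]"
  have wp: "w \<bullet> phi t = cub c0 c1 c2 c3 (real t) - c0" for t
    by (simp add: inner_phi w_def cub_def)
  have sA: "phi ` A \<subseteq> {x. w \<bullet> x \<ge> -c0}"
  proof
    fix y assume "y \<in> phi ` A"
    then obtain t where "t \<in> A" "y = phi t" by blast
    then show "y \<in> {x. w \<bullet> x \<ge> -c0}" using cA[of t] wp[of t] by simp
  qed
  have hA: "convex hull (phi ` A) \<subseteq> {x. w \<bullet> x \<ge> -c0}"
    by (rule hull_minimal[where S=convex, OF sA convex_halfspace_ge[of "-c0" w]])
  have sB: "phi ` B \<subseteq> {x. w \<bullet> x \<le> -c0}"
  proof
    fix y assume "y \<in> phi ` B"
    then obtain t where "t \<in> B" "y = phi t" by blast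
    then show "y \<in> {x. w \<bullet> x \<le> -c0}" using cB[of t] wp[of t] by simp
  qed
  have hB: "convex hull (phi ` B) \<subseteq> {x. w \<bullet> x \<le> -c0}"
    by (rule hull_minimal[where S=convex, OF sB convex_halfspace_le[of w "-c0"]])
  define F where "F = convex hull (phi ` A) \<inter> {x. w \<bullet> x = -c0}"
  have fc: "F face_of convex hull (phi ` A)"
    unfolding F_def by (rule face_of_Int_supporting_hyperplane_ge[OF convex_convex_hull]) (use hA in blast)
  have cp: "compact (phi ` A)" using assms(1) by (simp add: finite_imp_compact)
  obtain S' where S': "S' \<subseteq> phi ` A" "F = convex hull S'"
    by (rule face_of_convex_hull_subset[OF cp fc])
  have "S' \<subseteq> phi ` (A \<inter> B)"
  proof
    fix y assume y: "y \<in> S'"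
    have "y \<in> phi ` A" using S'(1) y by (rule subsetD)
    then obtain t where t: "t \<in> A" "y = phi t" by (rule imageE) simp
    have "y \<in> F" unfolding S'(2) using y by (rule hull_inc)
    then have "cub c0 c1 c2 c3 (real t) = 0" using t wp unfolding F_def by auto
    then show "y \<in> phi ` (A \<inter> B)" using cA t by auto
  qed
  then have "F \<subseteq> convex hull (phi ` (A \<inter> B))" unfolding S'(2) by (rule hull_mono)
  moreover have "convex hull (phi ` A) \<inter> convex hull (phi ` B) \<subseteq> F"
  proof
    fix x assume x: "x \<in> convex hull (phi ` A) \<inter> convex hull (phi ` B)"
    then have "w \<bullet> x \<ge> -c0" "w \<bullet> x \<le> -c0" using hA hB by blast+
    then show "x \<in> F" using x unfolding F_def by simp
  qed
  ultimately show "convex hull (phi ` A) \<inter> convex hull (phi ` B) \<subseteq> convex hull (phi ` (A \<inter> B))"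
    by blast
qed



definition is_cubic :: "(real \<Rightarrow> real) \<Rightarrow> bool" where
  "is_cubic f \<longleftrightarrow> (\<exists>c0 c1 c2 c3. \<forall>t. f t = cub c0 c1 c2 c3 t)"

lemma is_cubic3: "is_cubic (\<lambda>t. k*(t-r1)*(t-r2)*(t-r3))"
  unfolding is_cubic_def
  by (rule exI[of _ "-k*r1*r2*r3"], rule exI[of _ "k*(r1*r2+r1*r3+r2*r3)"],
      rule exI[of _ "-k*(r1+r2+r3)"], rule exI[of _ k])
     (simp add: cub_def algebra_simps power2_eq_square power3_eq_cube)

lemma is_cubic2: "is_cubic (\<lambda>t. k*(t-r1)*(t-r2))"
  unfolding is_cubic_def
  by (rule exI[of _ "k*r1*r2"], rule exI[of _ "-k*(r1+r2)"],
      rule exI[of _ k], rule exI[of _ 0])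
     (simp add: cub_def algebra_simps power2_eq_square power3_eq_cube)

lemma is_cubic1: "is_cubic (\<lambda>t. k*(t-r1))"
  unfolding is_cubic_def
  by (rule exI[of _ "-k*r1"], rule exI[of _ k],
      rule exI[of _ 0], rule exI[of _ 0])
     (simp add: cub_def algebra_simps)

lemma sep_main:
  assumes "finite A" "finite B" "is_cubic f"
    and "\<And>t. t \<in> A \<Longrightarrow> f (real t) \<ge> 0 \<and> (f (real t) = 0 \<longrightarrow> t \<in> B)"
    and "\<And>t. t \<in> B \<Longrightarrow> f (real t) \<le> 0"
  shows "convex hull (phi ` A) \<inter> convex hull (phi ` B) = convex hull (phi ` (A \<inter> B))"
proof -
  obtain c0 c1 c2 c3 where "\<forall>t. f t = cub c0 c1 c2 c3 t" using assms(3) unfolding is_cubic_def by blast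
  then have "sepok A B" unfolding sepok_def using assms(4,5) by metis
  then show ?thesis using sepok_hull assms(1,2) by blast
qed



lemma edge_comm: "edge a b = edge b a" unfolding edge_def by auto

lemma finite_edge: "finite (edge a b)" unfolding edge_def by simp

lemma card_edge: "a \<noteq> b \<Longrightarrow> card (edge a b) = 4" unfolding edge_def by auto

lemma qq: "t \<noteq> 2*x \<Longrightarrow> t \<noteq> 2*x+1 \<Longrightarrow> (real t - 2*real x)*(real t - 2*real x - 1) > 0"
proof (cases "t < 2*x")
  case True
  then have "real t \<le> 2*real x - 1" by linarith
  then show ?thesis by (intro mult_neg_neg) auto
next
  case False
  assume "t \<noteq> 2*x" "t \<noteq> 2*x+1"
  with False have "real t \<ge> 2*real x + 2" by linarith
  then show ?thesis by (intro mult_pos_pos) auto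
qed

definition HE :: "nat set \<Rightarrow> nat set \<Rightarrow> bool" where
  "HE A B \<longleftrightarrow> convex hull (phi ` A) \<inter> convex hull (phi ` B) = convex hull (phi ` (A \<inter> B))"

lemma HE_sym: "HE A B \<Longrightarrow> HE B A" unfolding HE_def by (simp add: Int_commute)

lemma sep_pts:
  assumes "finite A" "finite B" "is_cubic f"
    and "\<And>t. t \<in> A \<Longrightarrow> t \<in> B \<Longrightarrow> f (real t) = 0"
    and "\<And>t. t \<in> A \<Longrightarrow> t \<notin> B \<Longrightarrow> f (real t) > 0"
    and "\<And>t. t \<in> B \<Longrightarrow> t \<notin> A \<Longrightarrow> f (real t) < 0"
  shows "HE A B"
  unfolding HE_def
proof (rule sep_main[OF assms(1-3)])
  fix t assume "t \<in> A" then show "f (real t) \<ge> 0 \<and> (f (real t) = 0 \<longrightarrow> t \<in> B)"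
    using assms(4,5)[of t] by (cases "t \<in> B") auto
next
  fix t assume "t \<in> B" then show "f (real t) \<le> 0"
    using assms(4,6)[of t] by (cases "t \<in> A") auto
qed

lemma share_lt:
  assumes "x \<noteq> y" "x \<noteq> z" "y < z"
  shows "HE (edge x y) (edge x z)"
proof -
  define f where "f = (\<lambda>t. (-1)*(t - 2*real x)*(t - (2*real x+1))*(t - (2*real z - 1/2)))"
  have e: "f t = ((t - 2*real x)*(t - 2*real x - 1))*(2*real z - 1/2 - t)" for t :: real
    unfolding f_def by (simp add: algebra_simps)
  show ?thesis
  proof (rule sep_pts[where f = f])
    show "is_cubic f" unfolding f_def by (rule is_cubic3)
    fix t assume "t \<in> edge x y" "t \<in> edge x z"
    then have "t = 2*x \<or> t = 2*x+1" using assms unfolding edge_def by auto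
    then show "f (real t) = 0" unfolding e by auto
  next
    fix t assume "t \<in> edge x y" "t \<notin> edge x z"
    then have t: "t = 2*y \<or> t = 2*y+1" unfolding edge_def by auto
    have "(real t - 2*real x)*(real t - 2*real x - 1) > 0" using qq[of t x] t assms by auto
    moreover have "2*real z - 1/2 - real t > 0" using t assms by auto
    ultimately show "f (real t) > 0" unfolding e by (rule mult_pos_pos)
  next
    fix t assume "t \<in> edge x z" "t \<notin> edge x y"
    then have t: "t = 2*z \<or> t = 2*z+1" unfolding edge_def by auto
    have "(real t - 2*real x)*(real t - 2*real x - 1) > 0" using qq[of t x] t assms by auto
    moreover have "2*real z - 1/2 - real t < 0" using t assms by auto
    ultimately show "f (real t) < 0" unfolding e by (rule mult_pos_neg)
  qed (auto simp: finite_edge)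
qed

lemma share_gt:
  assumes "x \<noteq> y" "x \<noteq> z" "z < y"
  shows "HE (edge x y) (edge x z)"
proof -
  define f where "f = (\<lambda>t. 1*(t - 2*real x)*(t - (2*real x+1))*(t - (2*real y - 1/2)))"
  have e: "f t = ((t - 2*real x)*(t - 2*real x - 1))*(t - (2*real y - 1/2))" for t :: real
    unfolding f_def by (simp add: algebra_simps)
  show ?thesis
  proof (rule sep_pts[where f = f])
    show "is_cubic f" unfolding f_def by (rule is_cubic3)
    fix t assume "t \<in> edge x y" "t \<in> edge x z"
    then have "t = 2*x \<or> t = 2*x+1" using assms unfolding edge_def by auto
    then show "f (real t) = 0" unfolding e by auto
  next
    fix t assume "t \<in> edge x y" "t \<notin> edge x z"
    then have t: "t = 2*y \<or> t = 2*y+1" unfolding edge_def by auto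
    have "(real t - 2*real x)*(real t - 2*real x - 1) > 0" using qq[of t x] t assms by auto
    moreover have "real t - (2*real y - 1/2) > 0" using t assms by auto
    ultimately show "f (real t) > 0" unfolding e by (rule mult_pos_pos)
  next
    fix t assume "t \<in> edge x z" "t \<notin> edge x y"
    then have t: "t = 2*z \<or> t = 2*z+1" unfolding edge_def by auto
    have "(real t - 2*real x)*(real t - 2*real x - 1) > 0" using qq[of t x] t assms by auto
    moreover have "real t - (2*real y - 1/2) < 0" using t assms by auto
    ultimately show "f (real t) < 0" unfolding e by (rule mult_pos_neg)
  qed (auto simp: finite_edge)
qed

lemma disj1:
  assumes "a < b" "b < c" "c < d"
  shows "HE (edge a b) (edge c d)"
proof -
  define f where "f = (\<lambda>t. (-1)*(t - (2*real c - 1/2)))"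
  show ?thesis
  proof (rule sep_pts[where f = f])
    show "is_cubic f" unfolding f_def by (rule is_cubic1)
    fix t assume "t \<in> edge a b" "t \<in> edge c d"
    then have False using assms unfolding edge_def by (auto; presburger)
    then show "f (real t) = 0" by simp
  next
    fix t assume "t \<in> edge a b" "t \<notin> edge c d"
    then have t: "t = 2*a \<or> t = 2*a+1 \<or> t = 2*b \<or> t = 2*b+1" unfolding edge_def by auto
    then show "f (real t) > 0" using assms unfolding f_def by auto
  next
    fix t assume "t \<in> edge c d" "t \<notin> edge a b"
    then have t: "t = 2*c \<or> t = 2*c+1 \<or> t = 2*d \<or> t = 2*d+1" unfolding edge_def by auto
    then show "f (real t) < 0" using assms unfolding f_def by auto
  qed (auto simp: finite_edge)
qed

lemma sgn_lemmas:
  fixes x y z :: real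
  shows "x < 0 \<Longrightarrow> y < 0 \<Longrightarrow> z < 0 \<Longrightarrow> (-1)*x*y*z > 0"
    and "x > 0 \<Longrightarrow> y > 0 \<Longrightarrow> z < 0 \<Longrightarrow> (-1)*x*y*z > 0"
    and "x > 0 \<Longrightarrow> y < 0 \<Longrightarrow> z < 0 \<Longrightarrow> (-1)*x*y*z < 0"
    and "x > 0 \<Longrightarrow> y > 0 \<Longrightarrow> z > 0 \<Longrightarrow> (-1)*x*y*z < 0"
    and "x < 0 \<Longrightarrow> y < 0 \<Longrightarrow> 1*x*y > 0"
    and "x > 0 \<Longrightarrow> y > 0 \<Longrightarrow> 1*x*y > 0"
    and "x > 0 \<Longrightarrow> y < 0 \<Longrightarrow> 1*x*y < 0"
proof -
  show "x < 0 \<Longrightarrow> y < 0 \<Longrightarrow> z < 0 \<Longrightarrow> (-1)*x*y*z > 0"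
  proof -
    assume h: "x < 0" "y < 0" "z < 0"
    have "x*y > 0" using h by (intro mult_neg_neg)
    then have "x*y*z < 0" using h by (intro mult_pos_neg)
    then show ?thesis by simp
  qed
  show "x > 0 \<Longrightarrow> y > 0 \<Longrightarrow> z < 0 \<Longrightarrow> (-1)*x*y*z > 0"
  proof -
    assume h: "x > 0" "y > 0" "z < 0"
    have "x*y > 0" using h by (intro mult_pos_pos)
    then have "x*y*z < 0" using h by (intro mult_pos_neg)
    then show ?thesis by simp
  qed
  show "x > 0 \<Longrightarrow> y < 0 \<Longrightarrow> z < 0 \<Longrightarrow> (-1)*x*y*z < 0"
  proof -
    assume h: "x > 0" "y < 0" "z < 0"
    have "x*y < 0" using h by (intro mult_pos_neg)
    then have "x*y*z > 0" using h by (intro mult_neg_neg)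
    then show ?thesis by simp
  qed
  show "x > 0 \<Longrightarrow> y > 0 \<Longrightarrow> z > 0 \<Longrightarrow> (-1)*x*y*z < 0"
  proof -
    assume h: "x > 0" "y > 0" "z > 0"
    have "x*y > 0" using h by (intro mult_pos_pos)
    then have "x*y*z > 0" using h by (intro mult_pos_pos)
    then show ?thesis by simp
  qed
  show "x < 0 \<Longrightarrow> y < 0 \<Longrightarrow> 1*x*y > 0" by (simp add: mult_neg_neg)
  show "x > 0 \<Longrightarrow> y > 0 \<Longrightarrow> 1*x*y > 0" by simp
  show "x > 0 \<Longrightarrow> y < 0 \<Longrightarrow> 1*x*y < 0" by (simp add: mult_pos_neg)
qed

lemma disj2:
  assumes "a < c" "c < b" "b < d"
  shows "HE (edge a b) (edge c d)"
proof -
  define f where "f = (\<lambda>t. (-1)*(t - (2*real c - 1/2))*(t - (2*real b - 1/2))*(t - (2*real d - 1/2)))"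
  show ?thesis
  proof (rule sep_pts[where f = f])
    show "is_cubic f" unfolding f_def by (rule is_cubic3)
    fix t assume "t \<in> edge a b" "t \<in> edge c d"
    then have False using assms unfolding edge_def by (auto; presburger)
    then show "f (real t) = 0" by simp
  next
    fix t assume "t \<in> edge a b" "t \<notin> edge c d"
    then have t: "t = 2*a \<or> t = 2*a+1 \<or> t = 2*b \<or> t = 2*b+1" unfolding edge_def by auto
    then consider "t = 2*a \<or> t = 2*a+1" | "t = 2*b \<or> t = 2*b+1" by blast
    then show "f (real t) > 0"
    proof cases
      case 1 then show ?thesis unfolding f_def using assms by (intro sgn_lemmas(1)) auto
    next
      case 2 then show ?thesis unfolding f_def using assms by (intro sgn_lemmas(2)) auto
    qed
  next
    fix t assume "t \<in> edge c d" "t \<notin> edge a b"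
    then have t: "t = 2*c \<or> t = 2*c+1 \<or> t = 2*d \<or> t = 2*d+1" unfolding edge_def by auto
    then consider "t = 2*c \<or> t = 2*c+1" | "t = 2*d \<or> t = 2*d+1" by blast
    then show "f (real t) < 0"
    proof cases
      case 1 then show ?thesis unfolding f_def using assms by (intro sgn_lemmas(3)) auto
    next
      case 2 then show ?thesis unfolding f_def using assms by (intro sgn_lemmas(4)) auto
    qed
  qed (auto simp: finite_edge)
qed

lemma disj3:
  assumes "a < c" "c < d" "d < b"
  shows "HE (edge a b) (edge c d)"
proof -
  define f where "f = (\<lambda>t. 1*(t - (2*real c - 1/2))*(t - (2*real d + 3/2)))"
  show ?thesis
  proof (rule sep_pts[where f = f])
    show "is_cubic f" unfolding f_def by (rule is_cubic2)
    fix t assume "t \<in> edge a b" "t \<in> edge c d"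
    then have False using assms unfolding edge_def by (auto; presburger)
    then show "f (real t) = 0" by simp
  next
    fix t assume "t \<in> edge a b" "t \<notin> edge c d"
    then have t: "t = 2*a \<or> t = 2*a+1 \<or> t = 2*b \<or> t = 2*b+1" unfolding edge_def by auto
    then consider "t = 2*a \<or> t = 2*a+1" | "t = 2*b \<or> t = 2*b+1" by blast
    then show "f (real t) > 0"
    proof cases
      case 1 then show ?thesis unfolding f_def using assms by (intro sgn_lemmas(5)) auto
    next
      case 2 then show ?thesis unfolding f_def using assms by (intro sgn_lemmas(6)) auto
    qed
  next
    fix t assume "t \<in> edge c d" "t \<notin> edge a b"
    then have t: "t = 2*c \<or> t = 2*c+1 \<or> t = 2*d \<or> t = 2*d+1" unfolding edge_def by auto
    then show "f (real t) < 0" unfolding f_def using assms by (intro sgn_lemmas(7)) auto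
  qed (auto simp: finite_edge)
qed

lemma HE_refl: "HE A A" unfolding HE_def by simp

lemma pair_HE:
  assumes "a < b" "c < d"
  shows "HE (edge a b) (edge c d)"
proof -
  have share: "HE (edge x y) (edge x z)" if "x \<noteq> y" "x \<noteq> z" for x y z
  proof -
    consider "y < z" | "z < y" | "y = z" by linarith
    then show ?thesis
    proof cases
      case 3 then show ?thesis by (simp add: HE_refl)
    qed (use share_lt share_gt that in auto)
  qed
  have disj: "HE (edge a b) (edge c d)" if "a < b" "c < d" "a < c" "a \<noteq> d" "b \<noteq> c" "b \<noteq> d" for a b c d
  proof -
    have "b < c \<or> (c < b \<and> b < d) \<or> d < b" using that by auto
    then show ?thesis using disj1[of a b c d] disj2[of a c b d] disj3[of a c d b] that by auto
  qed
  consider "a = c" | "a = d" | "b = c" | "b = d" | "a \<noteq> c" "a \<noteq> d" "b \<noteq> c" "b \<noteq> d" by blast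
  then show ?thesis
  proof cases
    case 1 then show ?thesis using share[of a b d] assms by simp
  next
    case 2
    have "HE (edge a b) (edge a c)" using share[of a b c] assms 2 by simp
    then show ?thesis using 2 edge_comm[of c d] by simp
  next
    case 3
    have "HE (edge b a) (edge b d)" using share[of b a d] assms 3 by simp
    then show ?thesis using 3 edge_comm[of a b] by simp
  next
    case 4
    have "HE (edge b a) (edge b c)" using share[of b a c] assms 4 by simp
    then show ?thesis using 4 edge_comm[of a b] edge_comm[of c d] by simp
  next
    case 5
    show ?thesis
    proof (cases "a < c")
      case True then show ?thesis using disj[of a b c d] assms 5 by simp
    next
      case False then have "c < a" using 5 by simp
      then show ?thesis using disj[of c d a b] assms 5 HE_sym by simp
    qed
  qed
qed



definition EE :: "nat \<Rightarrow> nat set set" where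
  "EE m = {edge a b | a b. a < b \<and> b < m}"

lemma edge_sub: "a < b \<Longrightarrow> b < m \<Longrightarrow> 2*m \<le> n \<Longrightarrow> edge a b \<subseteq> {0..<n}"
  unfolding edge_def by auto

lemma embeddable_EE:
  assumes "2*m \<le> n"
  shows "embeddable TYPE(real^3) 4 {0..<n} (EE m)"
  unfolding embeddable_def
proof
  show "uniform_hypergraph 4 {0..<n} (EE m)"
    unfolding uniform_hypergraph_def EE_def using edge_sub[OF _ _ assms] card_edge by fastforce
  have "linear_embedding 4 {0..<n} (EE m) phi"
    unfolding linear_embedding_def
  proof (intro conjI ballI)
    fix e assume "e \<in> EE m"
    then obtain a b where "e = edge a b" "a < b" unfolding EE_def by blast
    then show "aff_dim (phi ` e) = int 4 - 1" using aff_dim_edge[of a b] by simp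
  next
    fix e1 e2 assume "e1 \<in> EE m" "e2 \<in> EE m"
    then obtain a b c d where "e1 = edge a b" "a < b" "e2 = edge c d" "c < d" unfolding EE_def by blast
    then show "convex hull phi ` e1 \<inter> convex hull phi ` e2 = convex hull phi ` (e1 \<inter> e2)"
      using pair_HE[of a b c d] unfolding HE_def by simp
  qed
  then show "\<exists>\<phi>::nat \<Rightarrow> real^3. linear_embedding 4 {0..<n} (EE m) \<phi>" by blast
qed

lemma coloring_lb:
  assumes "2*m \<le> n" "strong_coloring 4 c {0..<n} (EE m) \<kappa>"
  shows "m \<le> c"
proof -
  define C where "C = (\<lambda>a. 2*a) ` {0..<m}"
  have cardC: "card C = m" unfolding C_def by (simp add: card_image inj_on_def)
  have inj: "inj_on \<kappa> C"
  proof (rule inj_onI)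
    fix x y assume "x \<in> C" "y \<in> C" "\<kappa> x = \<kappa> y"
    then obtain a b where ab: "x = 2*a" "y = 2*b" "a < m" "b < m" "\<kappa> (2*a) = \<kappa> (2*b)" unfolding C_def by auto
    have key: "\<kappa> (2*a) \<noteq> \<kappa> (2*b)" if "a < b" "b < m" for a b
    proof -
      have "edge a b \<in> EE m" unfolding EE_def using that by blast
      then have "card (\<kappa> ` edge a b) = card (edge a b)"
        using assms(2) card_edge[of a b] that unfolding strong_coloring_def by simp
      then have "inj_on \<kappa> (edge a b)" using inj_on_iff_eq_card[OF finite_edge] by blast
      moreover have "2*a \<in> edge a b" "2*b \<in> edge a b" "2*a \<noteq> 2*b" using that unfolding edge_def by auto
      ultimately show ?thesis by (meson inj_on_def)
    qed
    show "x = y"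
    proof (rule ccontr)
      assume "x \<noteq> y"
      then have "a < b \<or> b < a" using ab by auto
      then show False using key[of a b] key[of b a] ab by auto
    qed
  qed
  have "C \<subseteq> {0..<n}" unfolding C_def using assms(1) by auto
  then have "\<kappa> ` C \<subseteq> {1..c}" using assms(2) unfolding strong_coloring_def by blast
  then have "card (\<kappa> ` C) \<le> card {1..c}" by (rule card_mono[rotated]) simp
  then show ?thesis using card_image[OF inj] cardC by simp
qed

lemma chrom_EE:
  assumes "2*m \<le> n"
  shows "m \<le> strong_chromatic 4 {0..<n} (EE m)"
proof -
  have ex: "\<exists>\<kappa>. strong_coloring 4 n {0..<n} (EE m) \<kappa>"
  proof
    show "strong_coloring 4 n {0..<n} (EE m) Suc"
      unfolding strong_coloring_def EE_def
      using card_edge by (auto simp: card_image)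
  qed
  have "\<exists>\<kappa>. strong_coloring 4 (LEAST c. \<exists>\<kappa>. strong_coloring 4 c {0..<n} (EE m) \<kappa>) {0..<n} (EE m) \<kappa>"
    by (rule LeastI_ex) (use ex in blast)
  then obtain \<kappa> where "strong_coloring 4 (strong_chromatic 4 {0..<n} (EE m)) {0..<n} (EE m) \<kappa>"
    unfolding strong_chromatic_def by blast
  then show ?thesis using coloring_lb[OF assms] by blast
qed

lemma chrom_le:
  assumes "embeddable d 4 V E" "card V = n"
  shows "strong_chromatic 4 V E \<le> n"
proof -
  have fV: "finite V" and sub: "E \<subseteq> {e. e \<subseteq> V \<and> card e = 4}"
    using assms(1) unfolding embeddable_def uniform_hypergraph_def by auto
  obtain h where h: "bij_betw h V {0..<card V}" using ex_bij_betw_finite_nat[OF fV] by blast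
  have "strong_coloring 4 n V E (Suc \<circ> h)"
    unfolding strong_coloring_def
  proof
    have hv: "h ` V = {0..<n}" using h assms(2) unfolding bij_betw_def by simp
    have "(Suc \<circ> h) ` V = Suc ` {0..<n}" unfolding image_comp[symmetric] hv ..
    then show "(Suc \<circ> h) ` V \<subseteq> {1..n}" by auto
    show "\<forall>e\<in>E. card ((Suc \<circ> h) ` e) = 4"
    proof
      fix e assume "e \<in> E"
      then have e: "e \<subseteq> V" "card e = 4" using sub by auto
      have "inj_on (Suc \<circ> h) e" using h e(1) unfolding bij_betw_def
        by (auto simp: inj_on_def)
      then show "card ((Suc \<circ> h) ` e) = 4" using e(2) card_image by metis
    qed
  qed
  then have "\<exists>\<kappa>. strong_coloring 4 n V E \<kappa>" by blast
  then show ?thesis unfolding strong_chromatic_def by (rule Least_le)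
qed

theorem mainTheorem9:
  fixes n :: nat
  assumes "n \<ge> 4"
  shows "\<lfloor>sqrt (real n)\<rfloor> \<le> int (chi_s_dk TYPE(real^3) 4 n)"
proof -
  define m where "m = nat \<lfloor>sqrt (real n)\<rfloor>"
  have fl0: "\<lfloor>sqrt (real n)\<rfloor> \<ge> 0" by simp
  then have fm: "\<lfloor>sqrt (real n)\<rfloor> = int m" unfolding m_def by simp
  have "real m \<le> sqrt (real n)" using fm by (metis of_int_floor_le of_int_of_nat_eq)
  then have "(real m)^2 \<le> (sqrt (real n))^2" by (intro power_mono) auto
  then have "real (m*m) \<le> real n" by (simp add: power2_eq_square)
  then have mm: "m*m \<le> n" by linarith
  have "sqrt (real n) \<ge> 2" by (rule real_le_rsqrt) (use assms in simp)
  then have "\<lfloor>sqrt (real n)\<rfloor> \<ge> 2" by (metis floor_mono floor_numeral)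
  then have m2: "m \<ge> 2" using fm by simp
  have "2*m \<le> m*m" using m2 by simp
  then have le: "2*m \<le> n" using mm by linarith
  define S where "S = {strong_chromatic 4 V E | (V :: nat set) E.
       embeddable TYPE(real^3) 4 V E \<and> card V = n}"
  have "S \<subseteq> {..n}" unfolding S_def using chrom_le by fastforce
  then have fS: "finite S" by (rule finite_subset) simp
  have "strong_chromatic 4 {0..<n} (EE m) \<in> S"
    unfolding S_def using embeddable_EE[OF le] by fastforce
  then have "strong_chromatic 4 {0..<n} (EE m) \<le> Max S" using fS by simp
  then have "m \<le> chi_s_dk TYPE(real^3) 4 n"
    using chrom_EE[OF le] unfolding chi_s_dk_def S_def by simp
  then show ?thesis using fm by simp
qed

end
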